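(* There is a sufficiently large absolute constant $C>0$ such that the following holds. Assume $1\le d\le 10n$, and let $k_0\in[d]$, $n_0\in[n]$ satisfy $k_0n_0^2\ge Cn^2$. Then $\mathbb P(\mathcal D(k_0,n_0))\ge 1-e^{-n}$.
   Context: Let $\pi_n^1,\dots,\pi_n^d$ be independent uniformly random permutations of $[n]$. For $L\subset[d]$ and $I,J\subset[n]$ put $e_L(I,J)=\sum_{\ell\in L}\sum_{i\in I}\mathbf 1(\pi_n^\ell(i)\in J)$. The no-holes event is $$\mathcal D(k_0,n_0)=\bigcap_{L\subset[d]:|L|\ge k_0}\ \bigcap_{I,J\subset[n]:|I|,|J|\ge n_0}\Big\{e_L(I,J)\ge\frac{|L||I||J|}{2n}\Big\}.$$ *)

theory Defs
  imports "HOL-Combinatorics.Permutations" Complex_Main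
begin

text \<open>Sample space: d-tuples (indexed by [d] = {1..d}) of permutations of [n] = {1..n}.
  Independent uniform permutations = uniform distribution on this finite set.\<close>
definition perm_tuples :: "nat \<Rightarrow> nat \<Rightarrow> (nat \<Rightarrow> nat \<Rightarrow> nat) set" where
  "perm_tuples d n = Pi\<^sub>E {1..d} (\<lambda>_. {p. p permutes {1..n}})"

definition e_L :: "(nat \<Rightarrow> nat \<Rightarrow> nat) \<Rightarrow> nat set \<Rightarrow> nat set \<Rightarrow> nat set \<Rightarrow> nat" where
  "e_L \<pi> L I J = (\<Sum>l\<in>L. \<Sum>i\<in>I. (if \<pi> l i \<in> J then 1 else 0))"

definition no_holes :: "nat \<Rightarrow> nat \<Rightarrow> nat \<Rightarrow> nat \<Rightarrow> (nat \<Rightarrow> nat \<Rightarrow> nat) \<Rightarrow> bool" where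
  "no_holes d n k0 n0 \<pi> \<longleftrightarrow>
     (\<forall>L. L \<subseteq> {1..d} \<longrightarrow> card L \<ge> k0 \<longrightarrow>
       (\<forall>I J. I \<subseteq> {1..n} \<longrightarrow> J \<subseteq> {1..n} \<longrightarrow> card I \<ge> n0 \<longrightarrow> card J \<ge> n0 \<longrightarrow>
          real (e_L \<pi> L I J) \<ge> real (card L) * real (card I) * real (card J) / (2 * real n)))"

definition prob_no_holes :: "nat \<Rightarrow> nat \<Rightarrow> nat \<Rightarrow> nat \<Rightarrow> real" where
  "prob_no_holes d n k0 n0 =
     real (card {\<pi> \<in> perm_tuples d n. no_holes d n k0 n0 \<pi>}) / real (card (perm_tuples d n))"

end

theory Submission
  imports Defs
begin

lemma card_filter_sum:
  assumes "finite A" shows "card {x\<in>A. Q x} = (\<Sum>x\<in>A. if Q x then 1 else (0::nat))"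
  using assms by (simp add: sum.If_cases Int_def)

lemma swap_card:
  assumes U: "finite U" and S: "S \<subseteq> U" and x: "x \<in> U" "x \<notin> S" and y: "y \<in> U" "y \<notin> S"
  shows "card {p. p permutes U \<and> p ` S \<subseteq> K \<and> p y \<in> K} = card {p. p permutes U \<and> p ` S \<subseteq> K \<and> p x \<in> K}"
proof -
  let ?t = "Transposition.transpose x y"
  have fin: "finite {p. p permutes U}" using finite_permutations[OF U] .
  have tt: "?t \<circ> ?t = id" by (simp add: fun_eq_iff)
  have tS: "?t ` S = S" using x y by (force simp: Transposition.transpose_def)
  have key: "\<And>x y. x \<in> U \<Longrightarrow> x \<notin> S \<Longrightarrow> y \<in> U \<Longrightarrow> y \<notin> S \<Longrightarrow>
     card {p. p permutes U \<and> p ` S \<subseteq> K \<and> p y \<in> K} \<le> card {p. p permutes U \<and> p ` S \<subseteq> K \<and> p x \<in> K}"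
  proof -
    fix x y assume xy: "x \<in> U" "x \<notin> S" "y \<in> U" "y \<notin> S"
    let ?t = "Transposition.transpose x y"
    have tS: "?t ` S = S" using xy by (force simp: Transposition.transpose_def)
    have inj: "inj_on (\<lambda>p. p \<circ> ?t) X" for X
      by (rule inj_onI) (metis comp_assoc comp_id transpose_comp_involutory)
    show "card {p. p permutes U \<and> p ` S \<subseteq> K \<and> p y \<in> K} \<le> card {p. p permutes U \<and> p ` S \<subseteq> K \<and> p x \<in> K}"
    proof (rule card_inj_on_le[OF inj])
      show "finite {p. p permutes U \<and> p ` S \<subseteq> K \<and> p x \<in> K}" by (rule finite_subset[OF _ fin]) auto
      show "(\<lambda>p. p \<circ> ?t) ` {p. p permutes U \<and> p ` S \<subseteq> K \<and> p y \<in> K} \<subseteq> {p. p permutes U \<and> p ` S \<subseteq> K \<and> p x \<in> K}"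
      proof safe
        fix p assume p: "p permutes U" "p ` S \<subseteq> K" "p y \<in> K"
        show "p \<circ> ?t permutes U" by (rule permutes_compose[OF permutes_swap_id[OF xy(1,3)] p(1)])
        show "(p \<circ> ?t) x \<in> K" using p by simp
        fix z assume "z \<in> S" thus "(p \<circ> ?t) z \<in> K" using p xy by (auto simp: Transposition.transpose_def)
      qed
    qed
  qed
  show ?thesis using key[OF x y] key[OF y x] by simp
qed

lemma count_hits:
  assumes U: "finite U" and S: "S \<subseteq> U" and K: "K \<subseteq> U" and p: "p permutes U" "p ` S \<subseteq> K"
  shows "card {y\<in>U-S. p y \<in> K} = card K - card S"
proof -
  have inj: "inj_on p U" using p(1) permutes_inj_on by blast
  have "p ` {y\<in>U. p y \<in> K} = K" using permutes_image[OF p(1)] K by force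
  hence c1: "card {y\<in>U. p y \<in> K} = card K"
    by (metis (no_types, lifting) card_image inj inj_on_subset mem_Collect_eq subsetI)
  have eq: "{y\<in>U-S. p y \<in> K} = {y\<in>U. p y \<in> K} - S" by auto
  have sub: "S \<subseteq> {y\<in>U. p y \<in> K}" using S p(2) by auto
  have "finite S" using S U finite_subset by blast
  thus ?thesis unfolding eq using card_Diff_subset[OF _ sub] c1 by simp
qed

lemma recur:
  assumes U: "finite U" and S: "S \<subseteq> U" and x: "x \<in> U" "x \<notin> S" and K: "K \<subseteq> U"
  shows "card {p. p permutes U \<and> p ` S \<subseteq> K \<and> p x \<in> K} * (card U - card S)
       = card {p. p permutes U \<and> p ` S \<subseteq> K} * (card K - card S)"
proof -
  define A where "A = {p. p permutes U \<and> p ` S \<subseteq> K}"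
  have finA: "finite A" unfolding A_def by (rule finite_subset[OF _ finite_permutations[OF U]]) auto
  have finUS: "finite (U - S)" using U by simp
  have "(\<Sum>y\<in>U-S. card {p\<in>A. p y \<in> K}) = (\<Sum>y\<in>U-S. card {p. p permutes U \<and> p ` S \<subseteq> K \<and> p x \<in> K})"
  proof (rule sum.cong[OF refl])
    fix y assume "y \<in> U - S"
    thus "card {p\<in>A. p y \<in> K} = card {p. p permutes U \<and> p ` S \<subseteq> K \<and> p x \<in> K}"
      using swap_card[OF U S x, of y K] unfolding A_def by (simp add: conj_assoc)
  qed
  also have "\<dots> = card (U - S) * card {p. p permutes U \<and> p ` S \<subseteq> K \<and> p x \<in> K}" by simp
  finally have L: "(\<Sum>y\<in>U-S. card {p\<in>A. p y \<in> K}) = (card U - card S) * card {p. p permutes U \<and> p ` S \<subseteq> K \<and> p x \<in> K}"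
    using card_Diff_subset[OF finite_subset[OF S U] S] by simp
  have "(\<Sum>y\<in>U-S. card {p\<in>A. p y \<in> K}) = (\<Sum>y\<in>U-S. \<Sum>p\<in>A. if p y \<in> K then 1 else 0)"
    using finA by (simp add: card_filter_sum)
  also have "\<dots> = (\<Sum>p\<in>A. \<Sum>y\<in>U-S. if p y \<in> K then 1 else 0)" by (rule sum.swap)
  also have "\<dots> = (\<Sum>p\<in>A. card {y\<in>U-S. p y \<in> K})" by (rule sum.cong[OF refl], rule card_filter_sum[symmetric, OF finUS])
  also have "\<dots> = (\<Sum>p\<in>A. card K - card S)"
    by (rule sum.cong[OF refl]) (use count_hits[OF U S K] in \<open>auto simp: A_def\<close>)
  also have "\<dots> = card A * (card K - card S)" by simp
  finally show ?thesis using L unfolding A_def by (simp add: mult.commute)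
qed

lemma avoid_bound:
  assumes U: "finite U" and K: "K \<subseteq> U" and S: "S \<subseteq> U"
  shows "card {p. p permutes U \<and> p ` S \<subseteq> K} * card U ^ card S \<le> fact (card U) * card K ^ card S"
proof -
  have "finite S" using S U finite_subset by blast
  thus ?thesis using S
  proof (induction S rule: finite_induct)
    case empty
    thus ?case using card_permutations[OF refl U] by simp
  next
    case (insert x S)
    define a where "a = card {p. p permutes U \<and> p ` S \<subseteq> K}"
    define c where "c = card {p. p permutes U \<and> p ` S \<subseteq> K \<and> p x \<in> K}"
    define N where "N = card U"
    define k where "k = card K"
    define s where "s = card S"
    have SU: "S \<subseteq> U" "x \<in> U" using insert by auto
    have IH: "a * N ^ s \<le> fact N * k ^ s" using insert unfolding a_def N_def k_def s_def by auto
    have rec: "c * (N - s) = a * (k - s)" using recur[OF U SU(1) SU(2) insert(2) K]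
      unfolding a_def c_def N_def k_def s_def .
    have finA: "finite {p. p permutes U \<and> p ` S \<subseteq> K}"
      by (rule finite_subset[OF _ finite_permutations[OF U]]) auto
    have ca: "c \<le> a" unfolding a_def c_def by (rule card_mono[OF finA]) auto
    have kN: "k \<le> N" unfolding k_def N_def using K U card_mono by blast
    have sN: "s < N" unfolding s_def N_def using SU insert(2)
      by (metis U card_mono card_seteq finite_subset le_neq_implies_less subset_insertI2 insert_subset subsetI insertI1)
    have cN: "c * N \<le> a * k"
    proof (cases "s \<le> k")
      case True
      have "c * N = c * (N - s) + c * s" using sN by (simp add: add_mult_distrib2[symmetric])
      also have "\<dots> = a * (k - s) + c * s" using rec by simp
      also have "\<dots> \<le> a * (k - s) + a * s" using ca by simp
      also have "\<dots> = a * k" using True by (simp add: add_mult_distrib2[symmetric])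
      finally show ?thesis .
    next
      case False
      hence "c * (N - s) = 0" using rec by simp
      hence "c = 0" using sN by simp
      thus ?thesis by simp
    qed
    have eq: "{p. p permutes U \<and> p ` insert x S \<subseteq> K} = {p. p permutes U \<and> p ` S \<subseteq> K \<and> p x \<in> K}" by auto
    have "c * N ^ Suc s = (c * N) * N ^ s" by simp
    also have "\<dots> \<le> (a * k) * N ^ s" using cN by (rule mult_right_mono) simp
    also have "\<dots> = (a * N ^ s) * k" by simp
    also have "\<dots> \<le> (fact N * k ^ s) * k" using IH by (rule mult_right_mono) simp
    also have "\<dots> = fact N * k ^ Suc s" by simp
    finally show ?case using insert(1,2) unfolding eq c_def N_def k_def s_def by simp
  qed
qed

lemma pow_sum_binom:
  assumes "finite I" shows "(\<Sum>X\<in>Pow I. (c::real) ^ card X) = (1 + c) ^ card I"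
  using prod_add[OF assms, of "\<lambda>_. c" "\<lambda>_. 1"] by (simp add: add.commute)

lemma miss_moment:
  assumes U: "finite U" and N: "card U > 0" and I: "I \<subseteq> U" and J: "J \<subseteq> U"
  shows "(\<Sum>p\<in>{p. p permutes U}. (2::real) ^ card {i\<in>I. p i \<notin> J})
     \<le> fact (card U) * (1 + real (card U - card J) / real (card U)) ^ card I"
proof -
  define P where "P = {p. p permutes U}"
  have finP: "finite P" unfolding P_def using finite_permutations[OF U] .
  have finI: "finite I" using I U finite_subset by blast
  have "(\<Sum>p\<in>P. card {S\<in>Pow I. S \<subseteq> {i\<in>I. p i \<notin> J}}) = (\<Sum>p\<in>P. \<Sum>S\<in>Pow I. if S \<subseteq> {i\<in>I. p i \<notin> J} then 1 else 0)"
    by (rule sum.cong[OF refl], rule card_filter_sum, simp add: finI)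
  also have "\<dots> = (\<Sum>S\<in>Pow I. \<Sum>p\<in>P. if S \<subseteq> {i\<in>I. p i \<notin> J} then 1 else 0)" by (rule sum.swap)
  also have "\<dots> = (\<Sum>S\<in>Pow I. card {p\<in>P. S \<subseteq> {i\<in>I. p i \<notin> J}})"
    by (rule sum.cong[OF refl], rule card_filter_sum[symmetric, OF finP])
  also have "\<dots> = (\<Sum>S\<in>Pow I. card {p. p permutes U \<and> p ` S \<subseteq> U - J})"
  proof (rule sum.cong[OF refl])
    fix S assume "S \<in> Pow I"
    hence SI: "S \<subseteq> I" by simp
    have "{p\<in>P. S \<subseteq> {i\<in>I. p i \<notin> J}} = {p. p permutes U \<and> p ` S \<subseteq> U - J}"
      unfolding P_def using SI I by (auto dest: permutes_in_image)
    thus "card {p\<in>P. S \<subseteq> {i\<in>I. p i \<notin> J}} = card {p. p permutes U \<and> p ` S \<subseteq> U - J}" by simp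
  qed
  finally have eq: "(\<Sum>p\<in>P. card {S\<in>Pow I. S \<subseteq> {i\<in>I. p i \<notin> J}}) = (\<Sum>S\<in>Pow I. card {p. p permutes U \<and> p ` S \<subseteq> U - J})" .
  have pw: "(2::real) ^ card {i\<in>I. p i \<notin> J} = real (card {S\<in>Pow I. S \<subseteq> {i\<in>I. p i \<notin> J}})" for p
  proof -
    have "{S\<in>Pow I. S \<subseteq> {i\<in>I. p i \<notin> J}} = Pow {i\<in>I. p i \<notin> J}" by auto
    moreover have "finite {i\<in>I. p i \<notin> J}" using finI by simp
    ultimately show ?thesis by (simp add: card_Pow)
  qed
  define c where "c = real (card U - card J) / real (card U)"
  have cardK: "card (U - J) = card U - card J" using J U by (simp add: card_Diff_subset finite_subset)
  have bnd: "real (card {p. p permutes U \<and> p ` S \<subseteq> U - J}) \<le> fact (card U) * c ^ card S" if "S \<in> Pow I" for S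
  proof -
    have "S \<subseteq> U" using that I by auto
    have "card {p. p permutes U \<and> p ` S \<subseteq> U - J} * card U ^ card S \<le> fact (card U) * card (U - J) ^ card S"
      using avoid_bound[OF U _ \<open>S \<subseteq> U\<close>, of "U - J"] by blast
    hence "real (card {p. p permutes U \<and> p ` S \<subseteq> U - J} * card U ^ card S) \<le> real (fact (card U) * card (U - J) ^ card S)"
      by (rule of_nat_mono)
    hence h: "real (card {p. p permutes U \<and> p ` S \<subseteq> U - J}) * real (card U) ^ card S \<le> fact (card U) * real (card U - card J) ^ card S"
      unfolding cardK by simp
    have pos: "0 < real (card U) ^ card S" using N by simp
    have "c ^ card S = real (card U - card J) ^ card S / real (card U) ^ card S" unfolding c_def by (simp add: power_divide)
    hence "fact (card U) * c ^ card S = fact (card U) * real (card U - card J) ^ card S / real (card U) ^ card S" by simp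
    thus ?thesis using h pos by (simp add: pos_le_divide_eq)
  qed
  have "(\<Sum>p\<in>P. (2::real) ^ card {i\<in>I. p i \<notin> J}) = real (\<Sum>S\<in>Pow I. card {p. p permutes U \<and> p ` S \<subseteq> U - J})"
    unfolding pw eq[symmetric] by simp
  also have "\<dots> = (\<Sum>S\<in>Pow I. real (card {p. p permutes U \<and> p ` S \<subseteq> U - J}))" by simp
  also have "\<dots> \<le> (\<Sum>S\<in>Pow I. fact (card U) * c ^ card S)" by (rule sum_mono) (rule bnd)
  also have "\<dots> = fact (card U) * (1 + c) ^ card I" by (simp add: sum_distrib_left[symmetric] pow_sum_binom[OF finI])
  finally show ?thesis unfolding P_def c_def .
qed

lemma hit_moment:
  assumes U: "finite U" and N: "card U > 0" and I: "I \<subseteq> U" and J: "J \<subseteq> U"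
  shows "(\<Sum>p\<in>{p. p permutes U}. (1/2::real) ^ card {i\<in>I. p i \<in> J})
     \<le> fact (card U) * (1 - real (card J) / (2 * real (card U))) ^ card I"
proof -
  have finI: "finite I" using I U finite_subset by blast
  have split: "card {i\<in>I. p i \<in> J} + card {i\<in>I. p i \<notin> J} = card I" for p
  proof -
    have "{i\<in>I. p i \<in> J} \<union> {i\<in>I. p i \<notin> J} = I" "{i\<in>I. p i \<in> J} \<inter> {i\<in>I. p i \<notin> J} = {}" by auto
    thus ?thesis using card_Un_disjoint[of "{i\<in>I. p i \<in> J}" "{i\<in>I. p i \<notin> J}"] finI by simp
  qed
  have eq: "(1/2::real) ^ card {i\<in>I. p i \<in> J} = (2::real) ^ card {i\<in>I. p i \<notin> J} / 2 ^ card I" for p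
  proof -
    have "(2::real) ^ card I = 2 ^ card {i\<in>I. p i \<in> J} * 2 ^ card {i\<in>I. p i \<notin> J}"
      by (metis split power_add)
    thus ?thesis by (simp add: power_one_over)
  qed
  have bJ: "card J \<le> card U" using J U card_mono by blast
  have "(\<Sum>p\<in>{p. p permutes U}. (1/2::real) ^ card {i\<in>I. p i \<in> J})
      = (\<Sum>p\<in>{p. p permutes U}. (2::real) ^ card {i\<in>I. p i \<notin> J}) / 2 ^ card I"
    unfolding eq by (simp add: sum_divide_distrib)
  also have "\<dots> \<le> fact (card U) * (1 + real (card U - card J) / real (card U)) ^ card I / 2 ^ card I"
    by (rule divide_right_mono[OF miss_moment[OF U N I J]]) simp
  also have "\<dots> = fact (card U) * ((1 + real (card U - card J) / real (card U)) / 2) ^ card I"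
    by (simp add: power_divide)
  also have "(1 + real (card U - card J) / real (card U)) / 2 = 1 - real (card J) / (2 * real (card U))"
    using N bJ by (simp add: of_nat_diff field_simps)
  finally show ?thesis .
qed

lemma eL_eq:
  assumes "finite I"
  shows "e_L \<pi> L I J = (\<Sum>l\<in>L. card {i\<in>I. \<pi> l i \<in> J})"
  unfolding e_L_def by (rule sum.cong[OF refl], rule card_filter_sum[symmetric, OF assms])

lemma card_perm_tuples: "card (perm_tuples d n) = fact n ^ d"
  unfolding perm_tuples_def by (simp add: card_PiE card_permutations)

lemma finite_perm_tuples: "finite (perm_tuples d n)"
  unfolding perm_tuples_def by (rule finite_PiE) (auto intro: finite_permutations)

lemma tuple_moment:
  assumes n: "n > 0" and L: "L \<subseteq> {1..d}" and I: "I \<subseteq> {1..n}" and J: "J \<subseteq> {1..n}"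
  shows "(\<Sum>\<pi>\<in>perm_tuples d n. (1/2::real) ^ e_L \<pi> L I J)
     \<le> fact n ^ d * (1 - real (card J) / (2 * real n)) ^ (card I * card L)"
proof -
  define P where "P = {p. p permutes {1..n}}"
  define r where "r = (1 - real (card J) / (2 * real n)) ^ card I"
  define f where "f l p = (if l \<in> L then (1/2::real) ^ card {i\<in>I. p i \<in> J} else 1)" for l p
  have finI: "finite I" using I finite_subset by blast
  have pt: "(1/2::real) ^ e_L \<pi> L I J = (\<Prod>l\<in>{1..d}. f l (\<pi> l))" for \<pi>
  proof -
    have "(1/2::real) ^ e_L \<pi> L I J = (\<Prod>l\<in>L. (1/2::real) ^ card {i\<in>I. \<pi> l i \<in> J})"
      unfolding eL_eq[OF finI] by (simp add: power_sum)
    also have "\<dots> = (\<Prod>l\<in>{1..d}. f l (\<pi> l))"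
      unfolding f_def using prod.inter_restrict[of "{1..d}" "\<lambda>l. (1/2::real) ^ card {i\<in>I. \<pi> l i \<in> J}" L] L
      by (simp add: Int_absorb1)
    finally show ?thesis .
  qed
  have "(\<Sum>\<pi>\<in>perm_tuples d n. (1/2::real) ^ e_L \<pi> L I J) = (\<Sum>\<pi>\<in>PiE {1..d} (\<lambda>_. P). \<Prod>l\<in>{1..d}. f l (\<pi> l))"
    unfolding pt perm_tuples_def P_def ..
  also have "\<dots> = (\<Prod>l\<in>{1..d}. \<Sum>p\<in>P. f l p)"
    by (rule prod_sum_PiE[symmetric]) (auto simp: P_def intro: finite_permutations)
  also have "\<dots> \<le> (\<Prod>l\<in>{1..d}. (if l \<in> L then fact n * r else fact n))"
  proof (rule prod_mono, safe)
    fix l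
    show "0 \<le> (\<Sum>p\<in>P. f l p)" unfolding f_def by (auto intro: sum_nonneg)
    show "(\<Sum>p\<in>P. f l p) \<le> (if l \<in> L then fact n * r else fact n)"
    proof (cases "l \<in> L")
      case True
      thus ?thesis using hit_moment[of "{1..n}" I J] n I J unfolding f_def P_def r_def by simp
    next
      case False
      thus ?thesis unfolding f_def P_def using card_permutations[of "{1..n}" n] by simp
    qed
  qed
  also have "\<dots> = (\<Prod>l\<in>{1..d}. fact n * (if l \<in> L then r else 1))"
    by (rule prod.cong) auto
  also have "\<dots> = fact n ^ d * (\<Prod>l\<in>{1..d}. (if l \<in> L then r else 1))"
    by (simp add: prod.distrib)
  also have "(\<Prod>l\<in>{1..d}. (if l \<in> L then r else 1)) = r ^ card L"
    using prod.inter_restrict[of "{1..d}" "\<lambda>_. r" L] L by (simp add: Int_absorb1)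
  finally show ?thesis unfolding r_def by (simp add: power_mult)
qed

lemma ln2_le: "ln (2::real) \<le> 3/4"
proof -
  have "1 + 3/4 + (3/4)\<^sup>2/2 \<le> exp (3/4::real)" by (rule exp_lower_Taylor_quadratic) simp
  hence "2 \<le> exp (3/4::real)" by (simp add: power2_eq_square)
  thus ?thesis by (metis ln_exp ln_le_cancel_iff exp_gt_zero zero_less_numeral)
qed

lemma half_pow_exp: "(1/2::real) ^ m = exp (- ln 2 * real m)"
proof -
  have "exp (- ln 2 * real m) = exp (real m * (- ln 2)) " by (simp add: mult.commute)
  also have "\<dots> = exp (- ln 2) ^ m" by (rule exp_of_nat_mult)
  also have "exp (- ln (2::real)) = 1/2" by (simp add: exp_minus)
  finally show ?thesis by simp
qed

lemma bad_bound:
  assumes n: "n > 0" and L: "L \<subseteq> {1..d}" and I: "I \<subseteq> {1..n}" and J: "J \<subseteq> {1..n}"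
  shows "real (card {\<pi>\<in>perm_tuples d n. real (e_L \<pi> L I J) < real (card L) * real (card I) * real (card J) / (2 * real n)})
     \<le> real (card (perm_tuples d n)) * exp (- (real (card L) * real (card I) * real (card J) / real n) / 8)"
proof -
  define \<mu> where "\<mu> = real (card L) * real (card I) * real (card J) / real n"
  define B where "B = {\<pi>\<in>perm_tuples d n. real (e_L \<pi> L I J) < real (card L) * real (card I) * real (card J) / (2 * real n)}"
  define \<Omega> where "\<Omega> = perm_tuples d n"
  have finO: "finite \<Omega>" unfolding \<Omega>_def by (rule finite_perm_tuples)
  have BO: "B \<subseteq> \<Omega>" unfolding B_def \<Omega>_def by auto
  have mu0: "0 \<le> \<mu>" unfolding \<mu>_def by simp
  have bJ: "card J \<le> n" using J card_mono[of "{1..n}" J] by simp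
  have lb: "exp (- ln 2 * (\<mu> / 2)) \<le> (1/2::real) ^ e_L \<pi> L I J" if "\<pi> \<in> B" for \<pi>
  proof -
    have "real (e_L \<pi> L I J) < \<mu> / 2" using that unfolding B_def \<mu>_def by simp
    hence "- ln 2 * (\<mu> / 2) \<le> - ln 2 * real (e_L \<pi> L I J)" by (simp add: mult_le_cancel_left)
    thus ?thesis unfolding half_pow_exp by simp
  qed
  have "real (card B) * exp (- ln 2 * (\<mu> / 2)) = (\<Sum>\<pi>\<in>B. exp (- ln 2 * (\<mu> / 2)))" by simp
  also have "\<dots> \<le> (\<Sum>\<pi>\<in>B. (1/2::real) ^ e_L \<pi> L I J)" by (rule sum_mono) (rule lb)
  also have "\<dots> \<le> (\<Sum>\<pi>\<in>\<Omega>. (1/2::real) ^ e_L \<pi> L I J)" by (rule sum_mono2[OF finO BO]) simp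
  also have "\<dots> \<le> fact n ^ d * (1 - real (card J) / (2 * real n)) ^ (card I * card L)"
    unfolding \<Omega>_def by (rule tuple_moment[OF n L I J])
  also have "(1 - real (card J) / (2 * real n)) ^ (card I * card L) \<le> exp (- real (card J) / (2 * real n)) ^ (card I * card L)"
  proof (rule power_mono)
    show "1 - real (card J) / (2 * real n) \<le> exp (- real (card J) / (2 * real n))"
      using exp_ge_add_one_self[of "- real (card J) / (2 * real n)"] by simp
    show "0 \<le> 1 - real (card J) / (2 * real n)" using bJ n by (simp add: field_simps)
  qed
  also have "exp (- real (card J) / (2 * real n)) ^ (card I * card L) = exp (- \<mu> / 2)"
    unfolding exp_of_nat_mult[symmetric] \<mu>_def by (simp add: field_simps)
  finally have h: "real (card B) * exp (- ln 2 * (\<mu> / 2)) \<le> fact n ^ d * exp (- \<mu> / 2)"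
    by (simp add: mult_left_mono)
  have "real (card B) = real (card B) * exp (- ln 2 * (\<mu> / 2)) * exp (ln 2 * (\<mu> / 2))"
    by (simp add: exp_minus field_simps)
  also have "\<dots> \<le> fact n ^ d * exp (- \<mu> / 2) * exp (ln 2 * (\<mu> / 2))"
    by (rule mult_right_mono[OF h]) simp
  also have "\<dots> = fact n ^ d * exp (- \<mu> / 2 + ln 2 * (\<mu> / 2))" by (simp only: exp_add mult.assoc)
  also have "\<dots> \<le> fact n ^ d * exp (- \<mu> / 8)"
  proof -
    have "ln 2 * (\<mu> / 2) \<le> 3/4 * (\<mu> / 2)" using ln2_le mu0 by (intro mult_right_mono) auto
    hence "- \<mu> / 2 + ln 2 * (\<mu> / 2) \<le> - \<mu> / 8" by linarith
    thus ?thesis by simp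
  qed
  finally show ?thesis unfolding B_def[symmetric] \<mu>_def card_perm_tuples by simp
qed

lemma main_bound:
  assumes d1: "1 \<le> d" and dn: "d \<le> 10 * n" and n0: "n0 \<in> {1..n}" and k0: "k0 \<in> {1..d}"
    and big: "real k0 * real n0 ^ 2 \<ge> 200 * real n ^ 2"
  shows "prob_no_holes d n k0 n0 \<ge> 1 - exp (- real n)"
proof -
  have n: "n > 0" using d1 dn by simp
  define \<Omega> where "\<Omega> = perm_tuples d n"
  define Bad where "Bad L I J = {\<pi>\<in>\<Omega>. real (e_L \<pi> L I J) < real (card L) * real (card I) * real (card J) / (2 * real n)}" for L I J
  define LL where "LL = {L. L \<subseteq> {1..d} \<and> k0 \<le> card L}"
  define II where "II = {I. I \<subseteq> {1..n} \<and> n0 \<le> card I}"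
  define M where "M = real (card \<Omega>) * exp (- 25 * real n)"
  have finO: "finite \<Omega>" unfolding \<Omega>_def by (rule finite_perm_tuples)
  have O0: "card \<Omega> > 0" unfolding \<Omega>_def card_perm_tuples by simp
  have finLL: "finite LL" unfolding LL_def by (rule finite_subset[of _ "Pow {1..d}"]) auto
  have finII: "finite II" unfolding II_def by (rule finite_subset[of _ "Pow {1..n}"]) auto
  have cLL: "card LL \<le> 2 ^ d" unfolding LL_def
    using card_mono[of "Pow {1..d}" "{L. L \<subseteq> {1..d} \<and> k0 \<le> card L}"] by (auto simp: card_Pow)
  have cII: "card II \<le> 2 ^ n" unfolding II_def
    using card_mono[of "Pow {1..n}" "{I. I \<subseteq> {1..n} \<and> n0 \<le> card I}"] by (auto simp: card_Pow)
  have finB: "finite (Bad L I J)" for L I J unfolding Bad_def using finO by simp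
  have bB: "real (card (Bad L I J)) \<le> M" if "L \<in> LL" "I \<in> II" "J \<in> II" for L I J
  proof -
    have L: "L \<subseteq> {1..d}" "k0 \<le> card L" and I: "I \<subseteq> {1..n}" "n0 \<le> card I" and J: "J \<subseteq> {1..n}" "n0 \<le> card J"
      using that unfolding LL_def II_def by auto
    define \<mu> where "\<mu> = real (card L) * real (card I) * real (card J) / real n"
    have "real k0 * real n0 ^ 2 \<le> real (card L) * real (card I) * real (card J)"
    proof -
      have h1: "real n0 * real n0 \<le> real (card I) * real (card J)" using I J by (intro mult_mono) auto
      have h2: "real k0 \<le> real (card L)" using L by simp
      have "real k0 * (real n0 * real n0) \<le> real (card L) * (real (card I) * real (card J))"
        by (rule mult_mono[OF h2 h1]) simp_all
      thus ?thesis by (simp add: power2_eq_square mult.assoc)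
    qed
    hence "200 * real n ^ 2 \<le> real (card L) * real (card I) * real (card J)" using big by linarith
    hence mu: "200 * real n \<le> \<mu>" unfolding \<mu>_def using n by (simp add: field_simps power2_eq_square)
    have "real (card (Bad L I J)) \<le> real (card \<Omega>) * exp (- \<mu> / 8)"
      using bad_bound[OF n L(1) I(1) J(1)] unfolding Bad_def \<Omega>_def \<mu>_def by simp
    also have "\<dots> \<le> M" unfolding M_def using mu by (intro mult_left_mono) auto
    finally show ?thesis .
  qed
  have sub: "{\<pi>\<in>\<Omega>. \<not> no_holes d n k0 n0 \<pi>} \<subseteq> (\<Union>L\<in>LL. \<Union>I\<in>II. \<Union>J\<in>II. Bad L I J)"
    unfolding no_holes_def Bad_def LL_def II_def by (auto simp: not_le)
  have "card {\<pi>\<in>\<Omega>. \<not> no_holes d n k0 n0 \<pi>} \<le> card (\<Union>L\<in>LL. \<Union>I\<in>II. \<Union>J\<in>II. Bad L I J)"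
    by (rule card_mono[OF _ sub]) (auto simp: finLL finII finB)
  also have "\<dots> \<le> (\<Sum>L\<in>LL. card (\<Union>I\<in>II. \<Union>J\<in>II. Bad L I J))" by (rule card_UN_le[OF finLL])
  also have "\<dots> \<le> (\<Sum>L\<in>LL. \<Sum>I\<in>II. card (\<Union>J\<in>II. Bad L I J))"
    by (rule sum_mono, rule card_UN_le[OF finII])
  also have "\<dots> \<le> (\<Sum>L\<in>LL. \<Sum>I\<in>II. \<Sum>J\<in>II. card (Bad L I J))"
    by (intro sum_mono card_UN_le[OF finII])
  finally have c0: "card {\<pi>\<in>\<Omega>. \<not> no_holes d n k0 n0 \<pi>} \<le> (\<Sum>L\<in>LL. \<Sum>I\<in>II. \<Sum>J\<in>II. card (Bad L I J))" .
  have c1: "real (card {\<pi>\<in>\<Omega>. \<not> no_holes d n k0 n0 \<pi>}) \<le> (\<Sum>L\<in>LL. \<Sum>I\<in>II. \<Sum>J\<in>II. real (card (Bad L I J)))"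
    using of_nat_mono[OF c0, where 'a=real] by simp
  have "real (card {\<pi>\<in>\<Omega>. \<not> no_holes d n k0 n0 \<pi>}) \<le> (\<Sum>L\<in>LL. \<Sum>I\<in>II. \<Sum>J\<in>II. real (card (Bad L I J)))"
    by (rule c1)
  also have "\<dots> \<le> (\<Sum>L\<in>LL. \<Sum>I\<in>II. \<Sum>J\<in>II. M)" by (intro sum_mono bB)
  also have "\<dots> = real (card LL) * real (card II) * real (card II) * M" by simp
  also have "\<dots> \<le> 2 ^ d * 2 ^ n * 2 ^ n * M"
  proof -
    have M0: "0 \<le> M" unfolding M_def by simp
    have "real (card LL) \<le> real (2 ^ d)" "real (card II) \<le> real (2 ^ n)"
      using of_nat_mono[OF cLL] of_nat_mono[OF cII] by blast+
    hence "real (card LL) \<le> 2 ^ d" "real (card II) \<le> 2 ^ n" by simp_all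
    thus ?thesis using M0 by (intro mult_mono) auto
  qed
  also have "(2::real) ^ d * 2 ^ n * 2 ^ n \<le> exp (9 * real n)"
  proof -
    have "(2::real) ^ d * 2 ^ n * 2 ^ n = 2 ^ (d + 2 * n)" by (simp add: power_add mult_2)
    also have "\<dots> \<le> 2 ^ (12 * n)" using dn by (intro power_increasing) auto
    also have "\<dots> = exp (real (12 * n) * ln 2)" by (subst exp_of_nat_mult) simp
    also have "\<dots> \<le> exp (9 * real n)"
    proof -
      have "real n * ln 2 \<le> real n * (3/4)" by (rule mult_left_mono[OF ln2_le]) simp
      hence "real (12 * n) * ln 2 \<le> 9 * real n" by simp
      thus ?thesis by simp
    qed
    finally show ?thesis .
  qed
  hence "2 ^ d * 2 ^ n * 2 ^ n * M \<le> exp (9 * real n) * M" by (rule mult_right_mono) (simp add: M_def)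
  also have "exp (9 * real n) * M = real (card \<Omega>) * exp (- 16 * real n)"
    unfolding M_def by (simp add: exp_add[symmetric] algebra_simps)
  also have "\<dots> \<le> real (card \<Omega>) * exp (- real n)" by (intro mult_left_mono) auto
  finally have bad: "real (card {\<pi>\<in>\<Omega>. \<not> no_holes d n k0 n0 \<pi>}) \<le> real (card \<Omega>) * exp (- real n)" .
  have "card {\<pi>\<in>\<Omega>. no_holes d n k0 n0 \<pi>} = card \<Omega> - card {\<pi>\<in>\<Omega>. \<not> no_holes d n k0 n0 \<pi>}"
  proof -
    have "{\<pi>\<in>\<Omega>. no_holes d n k0 n0 \<pi>} = \<Omega> - {\<pi>\<in>\<Omega>. \<not> no_holes d n k0 n0 \<pi>}" by auto
    thus ?thesis using finO by (simp add: card_Diff_subset)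
  qed
  hence "real (card {\<pi>\<in>\<Omega>. no_holes d n k0 n0 \<pi>}) = real (card \<Omega>) - real (card {\<pi>\<in>\<Omega>. \<not> no_holes d n k0 n0 \<pi>})"
    using card_mono[OF finO, of "{\<pi>\<in>\<Omega>. \<not> no_holes d n k0 n0 \<pi>}"] by (simp add: of_nat_diff)
  hence "real (card {\<pi>\<in>\<Omega>. no_holes d n k0 n0 \<pi>}) \<ge> real (card \<Omega>) * (1 - exp (- real n))"
    using bad by (simp add: algebra_simps)
  thus ?thesis unfolding prob_no_holes_def \<Omega>_def[symmetric] using O0 by (simp add: field_simps)
qed

theorem lemma4p1:
  shows "\<exists>C::real. C > 0 \<and>
    (\<forall>n d k0 n0 :: nat. 1 \<le> d \<longrightarrow> d \<le> 10 * n \<longrightarrow>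
       k0 \<in> {1..d} \<longrightarrow> n0 \<in> {1..n} \<longrightarrow>
       real k0 * real n0 ^ 2 \<ge> C * real n ^ 2 \<longrightarrow>
       prob_no_holes d n k0 n0 \<ge> 1 - exp (- real n))"
  by (rule exI[of _ 200]) (auto intro: main_bound)

end
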